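(* Let $\alpha \in (0, \tfrac{1}{2}\pi)$ and put $\kappa = \sin \alpha$. Then $$\tfrac{1}{2} \pi \,_2F_1 (\tfrac{1}{3}, \tfrac{2}{3}; 1; \kappa^2) = \sqrt6 \int_{\cos \frac{1}{3} (\pi + \alpha)}^{\cos \frac{1}{3} (\pi - \alpha)} \frac{1}{\sqrt{T_6 (x) - \cos 2 \alpha}} \, {\rm d} x .$$
   Context: $\,_2F_1$ denotes the Gauss hypergeometric function. $T_6$ is the degree six Chebyshev polynomial of the first kind, so that $T_6(\cos t) = \cos 6t$. *)

theory Defs
  imports "HOL-Analysis.Analysis"
begin

text \<open>Gauss hypergeometric function as its power series
  (convergent for abs z < 1, which is the only case used).\<close>
definition hyp2F1 :: "real \<Rightarrow> real \<Rightarrow> real \<Rightarrow> real \<Rightarrow> real" where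
  "hyp2F1 a b c z =
     (\<Sum>n. pochhammer a n * pochhammer b n / (pochhammer c n * fact n) * z ^ n)"

text \<open>Chebyshev polynomial of the first kind of degree six, T6 (cos t) = cos (6 t).\<close>
definition cheb6 :: "real \<Rightarrow> real" where
  "cheb6 x = 32 * x ^ 6 - 48 * x ^ 4 + 18 * x ^ 2 - 1"

end

theory Submission
  imports Defs "HOL-Analysis.Analysis"
begin


fun aa :: "nat \<Rightarrow> real" where
  "aa 0 = 1" | "aa (Suc 0) = 0"
| "aa (Suc (Suc k)) = (real k + 2/3) * (real k + 4/3) / ((real k + 1) * (real k + 2)) * aa k"

lemma aa_bounds: "0 \<le> aa k \<and> aa k \<le> 1"
proof (induction k rule: aa.induct)
  case (3 k)
  define r where "r = (real k + 2/3) * (real k + 4/3) / ((real k + 1) * (real k + 2))"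
  have r0: "0 \<le> r" unfolding r_def by simp
  have "(real k + 2/3) * (real k + 4/3) \<le> (real k + 1) * (real k + 2)" by (simp add: algebra_simps)
  then have r1: "r \<le> 1" unfolding r_def by (simp add: divide_le_eq_1)
  have "aa (Suc (Suc k)) = r * aa k" by (simp add: r_def)
  then show ?case using 3 r0 r1 by (simp add: mult_le_one)
qed auto

lemma aa_odd: "aa (Suc (2*n)) = 0"
proof (induction n)
  case (Suc n)
  have "Suc (2 * Suc n) = Suc (Suc (Suc (2*n)))" by simp
  then show ?case using Suc by (simp only: aa.simps)
qed simp

definition S :: "real \<Rightarrow> real" where "S z = (\<Sum>k. aa k * z^k)"
definition S1 :: "real \<Rightarrow> real" where "S1 z = (\<Sum>k. diffs aa k * z^k)"
definition S2 :: "real \<Rightarrow> real" where "S2 z = (\<Sum>k. diffs (diffs aa) k * z^k)"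

lemma summable_aa: "norm z < 1 \<Longrightarrow> summable (\<lambda>k. aa k * z^k)"
proof (rule summable_comparison_test[of _ "\<lambda>k. \<bar>z\<bar>^k"])
  assume z: "norm z < 1"
  show "\<exists>N. \<forall>n\<ge>N. norm (aa n * z ^ n) \<le> \<bar>z\<bar> ^ n"
    using aa_bounds by (auto simp: abs_mult power_abs intro!: mult_left_le_one_le)
  show "summable (\<lambda>k. \<bar>z\<bar> ^ k)" using z by (simp add: summable_geometric)
qed

lemma summable_S1: "norm z < 1 \<Longrightarrow> summable (\<lambda>k. diffs aa k * z^k)"
  by (rule termdiff_converges[where K=1]) (auto intro: summable_aa)

lemma summable_S2: "norm z < 1 \<Longrightarrow> summable (\<lambda>k. diffs (diffs aa) k * z^k)"
  by (rule termdiff_converges[where K=1]) (auto intro: summable_S1)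

lemma DERIV_S: "norm z < 1 \<Longrightarrow> (S has_field_derivative S1 z) (at z)"
  unfolding S_def[abs_def] S1_def by (rule termdiffs_strong'[where K=1]) (auto intro: summable_aa)

lemma DERIV_S1: "norm z < 1 \<Longrightarrow> (S1 has_field_derivative S2 z) (at z)"
  unfolding S1_def[abs_def] S2_def by (rule termdiffs_strong'[where K=1]) (auto intro: summable_S1)

lemma S_ode:
  assumes z: "norm z < 1"
  shows "(1 - z^2) * S2 z - 3 * z * S1 z - 8/9 * S z = 0"
proof -
  have s0: "(\<lambda>k. aa k * z^k) sums S z" using summable_aa[OF z] by (simp add: S_def summable_sums)
  have s1: "(\<lambda>k. diffs aa k * z^k) sums S1 z" using summable_S1[OF z] by (simp add: S1_def summable_sums)
  have s2: "(\<lambda>k. diffs (diffs aa) k * z^k) sums S2 z" using summable_S2[OF z] by (simp add: S2_def summable_sums)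
  have e2: "diffs (diffs aa) k = (real k+1)*(real k+2)* aa (Suc (Suc k))" for k
    by (simp add: diffs_def algebra_simps del: aa.simps)
  have e1: "diffs aa k = (real k+1) * aa (Suc k)" for k
    by (simp add: diffs_def algebra_simps)
  define f where "f k = real k * (real k - 1) * aa k * z^k" for k
  have "(\<lambda>k. f (Suc (Suc k))) = (\<lambda>k. z^2 * (diffs (diffs aa) k * z^k))"
    by (rule ext) (simp add: f_def e2 power2_eq_square algebra_simps)
  then have "(\<lambda>k. f (Suc (Suc k))) sums (z^2 * S2 z)" using sums_mult[OF s2] by simp
  then have "(\<lambda>k. f (Suc k)) sums (z^2*S2 z + f (Suc 0))" by (rule iffD1[OF sums_Suc_iff[of "\<lambda>k. f (Suc k)"]])
  then have "f sums (z^2*S2 z + f (Suc 0) + f 0)" by (rule iffD1[OF sums_Suc_iff])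
  then have "f sums (z^2 * S2 z)" by (simp add: f_def)
  then have zz: "(\<lambda>k. real k * (real k - 1) * aa k * z^k) sums (z^2 * S2 z)" by (simp add: f_def[abs_def])
  define g where "g k = real k * aa k * z^k" for k
  have "(\<lambda>k. g (Suc k)) = (\<lambda>k. z * (diffs aa k * z^k))"
    by (rule ext) (simp add: g_def e1 algebra_simps)
  then have "(\<lambda>k. g (Suc k)) sums (z * S1 z)" using sums_mult[OF s1] by simp
  then have "g sums (z * S1 z + g 0)" by (rule iffD1[OF sums_Suc_iff])
  then have "g sums (z * S1 z)" by (simp add: g_def)
  then have z1: "(\<lambda>k. real k * aa k * z^k) sums (z * S1 z)" by (simp add: g_def[abs_def])
  have comb: "(\<lambda>k. diffs (diffs aa) k * z^k - real k * (real k - 1) * aa k * z^k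
       - 3 * (real k * aa k * z^k) - 8/9 * (aa k * z^k))
      sums (S2 z - z^2 * S2 z - 3 * (z * S1 z) - 8/9 * S z)"
    by (intro sums_diff sums_mult s0 z1 zz s2)
  have z0: "diffs (diffs aa) k * z^k - real k * (real k - 1) * aa k * z^k
       - 3 * (real k * aa k * z^k) - 8/9 * (aa k * z^k) = 0" for k
  proof -
    have c: "diffs (diffs aa) k = (real k + 2/3) * (real k + 4/3) * aa k"
    proof -
      have d: "(real k+1)*(real k+2) \<noteq> 0" by simp
      have "diffs (diffs aa) k = (real k+1)*(real k+2) * ((real k + 2/3) * (real k + 4/3) / ((real k+1)*(real k+2))) * aa k"
        unfolding e2 by simp
      also have "... = (real k + 2/3) * (real k + 4/3) * aa k" using d by simp
      finally show ?thesis .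
    qed
    show ?thesis unfolding c by (simp add: algebra_simps)
  qed
  have "(\<lambda>k. diffs (diffs aa) k * z^k - real k * (real k - 1) * aa k * z^k
       - 3 * (real k * aa k * z^k) - 8/9 * (aa k * z^k)) = (\<lambda>k. 0)" by (rule ext) (rule z0)
  with comb have "(\<lambda>k. 0::real) sums (S2 z - z^2 * S2 z - 3 * (z * S1 z) - 8/9 * S z)" by metis
  then have "S2 z - z^2 * S2 z - 3 * (z * S1 z) - 8/9 * S z = 0" using sums_unique2 sums_zero by blast
  then show ?thesis by (simp add: algebra_simps)
qed

lemma abs_sin_lt1: "-(pi/2) < t \<Longrightarrow> t < pi/2 \<Longrightarrow> \<bar>sin t\<bar> < 1"
proof -
  assume "-(pi/2) < t" "t < pi/2"
  then have "cos t > 0" by (intro cos_gt_zero_pi) auto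
  then have "cos t * cos t > 0" by simp
  then have "(sin t)^2 < 1" using sin_cos_squared_add[of t] by (simp add: power2_eq_square)
  then show ?thesis by (simp add: abs_square_less_1)
qed

lemma E_alg: "2 * ((c / 9 - u / 9) * (w + s / 3)) +
     2 * ((u - c) * (w + s / 3)) / 9 = (0::real)"
  by (simp add: field_simps)

lemma S_theta:
  assumes t: "-(pi/2) < t" "t < pi/2"
  shows "S (sin t) * cos t = cos (t/3)"
proof -
  define u where "u = (\<lambda>\<theta>. S (sin \<theta>) * cos \<theta>)"
  define w where "w = (\<lambda>\<theta>. S1 (sin \<theta>) * (cos \<theta>)^2 - S (sin \<theta>) * sin \<theta>)"
  have dS: "((\<lambda>t. S (sin t)) has_real_derivative S1 (sin t) * cos t) (at t)" if "\<bar>sin t\<bar> < 1" for t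
    using DERIV_chain2[OF DERIV_S[of "sin t"] DERIV_sin[of t]] that by simp
  have dS1: "((\<lambda>t. S1 (sin t)) has_real_derivative S2 (sin t) * cos t) (at t)" if "\<bar>sin t\<bar> < 1" for t
    using DERIV_chain2[OF DERIV_S1[of "sin t"] DERIV_sin[of t]] that by simp
  have du: "(u has_real_derivative w t) (at t)" if "-(pi/2) < t" "t < pi/2" for t
    unfolding u_def w_def
    by (rule DERIV_cong[OF DERIV_mult[OF dS DERIV_cos]]) (use abs_sin_lt1[OF that] in \<open>simp_all add: power2_eq_square algebra_simps\<close>)
  have dw: "(w has_real_derivative - u t / 9) (at t)" if "-(pi/2) < t" "t < pi/2" for t
  proof -
    have s1: "\<bar>sin t\<bar> < 1" using abs_sin_lt1[OF that] .
    have ode: "(1 - (sin t)^2) * S2 (sin t) - 3 * sin t * S1 (sin t) - 8/9 * S (sin t) = 0"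
      using S_ode[of "sin t"] s1 by simp
    have cs: "(cos t)^2 = 1 - (sin t)^2" by (simp add: cos_squared_eq)
    show ?thesis unfolding u_def w_def
      apply (rule DERIV_cong[OF DERIV_diff[OF DERIV_mult[OF dS1[OF s1] DERIV_power[OF DERIV_cos]] DERIV_mult[OF dS[OF s1] DERIV_sin]]])
      using ode cs by (simp add: numeral_2_eq_2) algebra
  qed
  define E where "E = (\<lambda>\<theta>. (w \<theta> + sin(\<theta>/3)/3)^2 + (u \<theta> - cos(\<theta>/3))^2/9)"
  have dE: "(E has_real_derivative 0) (at t)" if "-(pi/2) < t" "t < pi/2" for t
    unfolding E_def
    by (rule derivative_eq_intros du[OF that] dw[OF that] refl | simp)+ (rule E_alg)
  have "E t = E 0"
    by (rule DERIV_isconst3[of "-(pi/2)" "pi/2"]) (use t dE in auto)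
  also have "E 0 = 0"
    by (simp add: E_def u_def w_def S_def S1_def diffs_def)
  finally have "E t = 0" .
  moreover have "0 \<le> (w t + sin(t/3)/3)^2" "0 \<le> (u t - cos(t/3))^2" by simp_all
  ultimately have "(u t - cos(t/3))^2 = 0" unfolding E_def by linarith
  then show ?thesis by (simp add: u_def)
qed

lemma S_arcsin:
  assumes "\<bar>z\<bar> < 1"
  shows "S z * sqrt (1 - z^2) = cos (arcsin z / 3)"
proof -
  have b: "-(pi/2) < arcsin z" "arcsin z < pi/2" using arcsin_lt_bounded[of z] assms by auto
  show ?thesis using S_theta[OF b] assms by (simp add: cos_arcsin)
qed



definition W :: "nat \<Rightarrow> real" where "W k = integral {-(pi/2)..pi/2} (\<lambda>\<phi>. sin \<phi> ^ k)"

lemma sinpow_integrable: "(\<lambda>\<phi>. sin \<phi> ^ k) integrable_on {a..b::real}"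
  by (intro integrable_continuous_interval continuous_intros)

lemma W0: "W 0 = pi" by (simp add: W_def)

lemma alg2:
  fixes cc ss r p :: real
  assumes h: "cc * cc = 1 - ss * ss"
  shows "(1 + r) * (cc * p) * cc + - ss * (ss * p) = (r + 1) * p - (r + 2) * (ss * (ss * p))"
proof -
  have "(1 + r) * (cc * p) * cc = (1 + r) * p * (cc * cc)" by (simp add: algebra_simps)
  also have "... = (1 + r) * p * (1 - ss * ss)" by (simp add: h)
  finally show ?thesis by (simp add: algebra_simps)
qed

lemma W_rec: "(real k + 2) * W (Suc (Suc k)) = (real k + 1) * W k"
proof -
  define F where "F = (\<lambda>\<phi>::real. sin \<phi> ^ (Suc k) * cos \<phi>)"
  have d: "(F has_vector_derivative ((real k + 1) * sin x ^ k - (real k + 2) * sin x ^ (Suc (Suc k)))) (at x within {-(pi/2)..pi/2})" for x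
  proof -
    have "(F has_real_derivative (real (Suc k) * (cos x * sin x ^ k)) * cos x + (- sin x) * sin x ^ Suc k) (at x within {-(pi/2)..pi/2})"
    proof -
      have d1: "((\<lambda>x. sin x ^ Suc k) has_real_derivative real (Suc k) * (cos x * sin x ^ k)) (at x within {-(pi/2)..pi/2})"
        by (rule DERIV_cong[OF DERIV_power[OF has_field_derivative_at_within[OF DERIV_sin]]]) simp
      show ?thesis unfolding F_def
        by (rule DERIV_mult[OF d1 has_field_derivative_at_within[OF DERIV_cos]])
    qed
    moreover have "(real (Suc k) * (cos x * sin x ^ k)) * cos x + (- sin x) * sin x ^ Suc k
        = (real k + 1) * sin x ^ k - (real k + 2) * sin x ^ (Suc (Suc k))"
    proof -
      have "cos x * cos x = 1 - sin x * sin x" using sin_cos_squared_add[of x] by (simp add: power2_eq_square)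
      then show ?thesis by (simp only: power_Suc of_nat_Suc) (erule alg2)
    qed
    ultimately show ?thesis by (simp add: has_real_derivative_iff_has_vector_derivative)
  qed
  have "((\<lambda>x. (real k + 1) * sin x ^ k - (real k + 2) * sin x ^ (Suc (Suc k))) has_integral (F (pi/2) - F (-(pi/2)))) {-(pi/2)..pi/2}"
    by (rule fundamental_theorem_of_calculus) (use d in auto)
  then have "((\<lambda>x. (real k + 1) * sin x ^ k - (real k + 2) * sin x ^ (Suc (Suc k))) has_integral 0) {-(pi/2)..pi/2}"
    by (simp add: F_def)
  moreover have "((\<lambda>x. (real k + 1) * sin x ^ k - (real k + 2) * sin x ^ (Suc (Suc k))) has_integral
      ((real k + 1) * W k - (real k + 2) * W (Suc (Suc k)))) {-(pi/2)..pi/2}"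
    unfolding W_def by (intro has_integral_diff has_integral_mult_right integrable_integral sinpow_integrable)
  ultimately have "(real k + 1) * W k - (real k + 2) * W (Suc (Suc k)) = 0" by (rule has_integral_unique[rotated])
  then show ?thesis by simp
qed

lemma ratio_lemma: "(x::real) \<ge> 0 \<Longrightarrow> ((2 * x + 2/3) * (2 * x + 4/3) / ((2 * x + 1) * (2 * x + 2))) * ((2 * x + 1) / (2 * x + 2))
       = ((x + 1/3) * (x + 2/3) / ((x + 1) * (x + 1)))"
proof -
  assume x: "x \<ge> 0"
  have p: "2 * x + 1 \<noteq> 0" "2 * x + 2 \<noteq> 0" "x + 1 \<noteq> 0" using x by auto
  have "((2 * x + 2/3) * (2 * x + 4/3) / ((2 * x + 1) * (2 * x + 2))) * ((2 * x + 1) / (2 * x + 2))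
     = (2 * x + 2/3) * (2 * x + 4/3) / ((2 * x + 2) * (2 * x + 2))" using p by simp
  also have "... = (4 * ((x + 1/3) * (x + 2/3))) / (4 * ((x + 1) * (x + 1)))"
    by (intro arg_cong2[where f="(/)"]) (simp_all add: field_simps)
  also have "... = ((x + 1/3) * (x + 2/3) / ((x + 1) * (x + 1)))" by simp
  finally show ?thesis .
qed

lemma aaW: "aa (2*n) * W (2*n) = pi * (pochhammer (1/3) n * pochhammer (2/3) n / (fact n * fact n))"
proof (induction n)
  case 0
  then show ?case by (simp add: W0)
next
  case (Suc n)
  have e: "2 * Suc n = Suc (Suc (2*n))" by simp
  have wr: "W (Suc (Suc (2*n))) = (real (2*n) + 1) / (real (2*n) + 2) * W (2*n)"
    using W_rec[of "2*n"] by (simp add: field_simps)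
  have "aa (2 * Suc n) * W (2 * Suc n) =
     ((real (2*n) + 2/3) * (real (2*n) + 4/3) / ((real (2*n) + 1) * (real (2*n) + 2))) * ((real (2*n) + 1) / (real (2*n) + 2)) * (aa (2*n) * W (2*n))"
    by (simp only: e wr aa.simps) (simp only: mult_ac)
  also have "... = ((real n + 1/3) * (real n + 2/3) / ((real n + 1) * (real n + 1))) * (aa (2*n) * W (2*n))"
  proof -
    have "((2 * real n + 2/3) * (2 * real n + 4/3) / ((2 * real n + 1) * (2 * real n + 2))) * ((2 * real n + 1) / (2 * real n + 2))
       = ((real n + 1/3) * (real n + 2/3) / ((real n + 1) * (real n + 1)))"
      by (rule ratio_lemma) simp
    then show ?thesis by simp
  qed
  also have "... = pi * (pochhammer (1/3) (Suc n) * pochhammer (2/3) (Suc n) / (fact (Suc n) * fact (Suc n)))"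
  proof -
    have p: "real n + 1 > 0" "fact n > (0::real)" by simp_all
    show ?thesis unfolding Suc.IH using p by (simp add: pochhammer_Suc field_simps)
  qed
  finally show ?case .
qed

lemma W_odd: "aa (Suc (2*n)) * W (Suc (2*n)) = 0" by (simp add: aa_odd)

lemma series_integral:
  assumes k: "\<bar>\<kappa>\<bar> < 1"
  shows "(\<lambda>k. aa k * \<kappa>^k * W k) sums integral {-(pi/2)..pi/2} (\<lambda>\<phi>. S (\<kappa> * sin \<phi>))"
proof -
  define f where "f = (\<lambda>N \<phi>. \<Sum>k<N. aa k * (\<kappa> * sin \<phi>)^k)"
  have fi: "f N integrable_on {-(pi/2)..pi/2}" for N
    unfolding f_def by (intro integrable_continuous_real continuous_intros)
  have hi: "(\<lambda>\<phi>. 1 / (1 - \<bar>\<kappa>\<bar>)) integrable_on {-(pi/2)..pi/2}" by (intro integrable_continuous_real continuous_intros)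
  have le: "norm (f N \<phi>) \<le> 1 / (1 - \<bar>\<kappa>\<bar>)" for N \<phi>
  proof -
    have "norm (f N \<phi>) \<le> (\<Sum>k<N. \<bar>\<kappa>\<bar>^k)"
      unfolding f_def real_norm_def
    proof (rule order_trans[OF sum_abs], rule sum_mono)
      fix k
      have "\<bar>aa k * (\<kappa> * sin \<phi>)^k\<bar> = \<bar>aa k\<bar> * (\<bar>\<kappa>\<bar>^k * \<bar>sin \<phi>\<bar>^k)"
        by (simp add: abs_mult power_abs power_mult_distrib)
      also have "... \<le> 1 * (\<bar>\<kappa>\<bar>^k * 1)"
        using aa_bounds[of k] by (intro mult_mono) (auto intro!: power_le_one)
      finally show "\<bar>aa k * (\<kappa> * sin \<phi>)^k\<bar> \<le> \<bar>\<kappa>\<bar>^k" by simp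
    qed
    also have "... \<le> (\<Sum>k. \<bar>\<kappa>\<bar>^k)"
      using k by (intro sum_le_suminf) (auto simp: summable_geometric)
    also have "... = 1 / (1 - \<bar>\<kappa>\<bar>)" using k by (simp add: suminf_geometric)
    finally show ?thesis .
  qed
  have conv: "(\<lambda>N. f N \<phi>) \<longlonglongrightarrow> S (\<kappa> * sin \<phi>)" for \<phi>
  proof -
    have "\<bar>\<kappa> * sin \<phi>\<bar> \<le> \<bar>\<kappa>\<bar>"
      unfolding abs_mult by (rule mult_left_le) (simp_all add: abs_sin_le_one)
    then have "\<bar>\<kappa> * sin \<phi>\<bar> < 1" using k by linarith
    then have "summable (\<lambda>k. aa k * (\<kappa> * sin \<phi>)^k)" using summable_aa[of "\<kappa> * sin \<phi>"] by simp
    then show ?thesis unfolding f_def S_def by (rule summable_LIMSEQ)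
  qed
  have "(\<lambda>N. integral {-(pi/2)..pi/2} (f N)) \<longlonglongrightarrow> integral {-(pi/2)..pi/2} (\<lambda>\<phi>. S (\<kappa> * sin \<phi>))"
    by (rule dominated_convergence(2)[OF fi hi le conv])
  moreover have "integral {-(pi/2)..pi/2} (f N) = (\<Sum>k<N. aa k * \<kappa>^k * W k)" for N
  proof -
    have "integral {-(pi/2)..pi/2} (f N) = (\<Sum>k<N. integral {-(pi/2)..pi/2} (\<lambda>\<phi>. aa k * \<kappa>^k * sin \<phi> ^ k))"
      unfolding f_def by (subst integral_sum) (auto simp: power_mult_distrib mult.assoc intro!: integrable_continuous_real continuous_intros)
    also have "... = (\<Sum>k<N. aa k * \<kappa>^k * W k)"
      by (simp add: W_def)
    finally show ?thesis .
  qed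
  ultimately show ?thesis by (simp add: sums_def)
qed



lemma cheb6_cos: "cheb6 (cos t) = cos (6 * t)"
proof -
  have "cos (6 * t) = 2 * cos (3 * t) ^ 2 - 1" using cos_double_cos[of "3*t"] by simp
  also have "... = cheb6 (cos t)" unfolding cos_treble_cos cheb6_def
    by (simp add: eval_nat_numeral algebra_simps)
  finally show ?thesis by simp
qed

lemma series_final:
  assumes k: "\<bar>\<kappa>\<bar> < 1"
  shows "integral {-(pi/2)..pi/2} (\<lambda>\<phi>. S (\<kappa> * sin \<phi>)) = pi * hyp2F1 (1/3) (2/3) 1 (\<kappa>^2)"
proof -
  define I where "I = integral {-(pi/2)..pi/2} (\<lambda>\<phi>. S (\<kappa> * sin \<phi>))"
  define c where "c n = pochhammer (1/3) n * pochhammer (2/3) n / (pochhammer 1 n * fact n) * (\<kappa>^2)^n" for n :: nat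
  have s: "(\<lambda>k. aa k * \<kappa>^k * W k) sums I" unfolding I_def by (rule series_integral[OF k])
  have sm: "strict_mono (\<lambda>n::nat. 2*n)" by (auto simp: strict_mono_def)
  have z: "aa k * \<kappa>^k * W k = 0" if "k \<notin> range (\<lambda>n::nat. 2*n)" for k
  proof -
    have "odd k" using that by (metis evenE rangeI)
    then obtain m where "k = Suc (2*m)" using oddE by (metis Suc_eq_plus1)
    then show ?thesis by (simp add: aa_odd)
  qed
  have "(\<lambda>n. aa (2*n) * \<kappa>^(2*n) * W (2*n)) sums I"
    using sums_mono_reindex[OF sm, of "\<lambda>k. aa k * \<kappa>^k * W k", OF z] s by simp
  moreover have "aa (2*n) * \<kappa>^(2*n) * W (2*n) = pi * c n" for n
  proof -
    have "aa (2*n) * \<kappa>^(2*n) * W (2*n) = (aa (2*n) * W (2*n)) * (\<kappa>^2)^n"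
      by (simp add: power_mult)
    also have "... = pi * c n" unfolding aaW c_def by (simp add: pochhammer_fact)
    finally show ?thesis .
  qed
  ultimately have "(\<lambda>n. pi * c n) sums I" by simp
  then have "(\<lambda>n. pi * c n / pi) sums (I / pi)" by (rule sums_divide)
  then have "c sums (I / pi)" by simp
  then have "hyp2F1 (1/3) (2/3) 1 (\<kappa>^2) = I / pi" unfolding hyp2F1_def c_def[abs_def] by (rule sums_unique[symmetric])
  then show ?thesis unfolding I_def by simp
qed

locale th4 =
  fixes \<alpha> \<kappa> :: real
  assumes a0: "0 < \<alpha>" and a1: "\<alpha> < pi / 2" and kdef: "\<kappa> = sin \<alpha>"
begin

lemma k0: "0 < \<kappa>" using a0 a1 kdef by (simp add: sin_gt_zero)
lemma k1: "\<kappa> < 1"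
proof -
  have "sin \<alpha> < sin (pi/2)" using a0 a1 by (intro sin_monotone_2pi) auto
  then show ?thesis using kdef by simp
qed
lemma arcsin_k: "arcsin \<kappa> = \<alpha>" using a0 a1 kdef by (simp add: arcsin_sin)

definition v where "v \<phi> = arcsin (\<kappa> * sin \<phi>)"
definition g where "g \<phi> = cos (pi/3 - v \<phi> / 3)"
definition g' where "g' \<phi> = sin (pi/3 - v \<phi> / 3) * (\<kappa> * cos \<phi> / sqrt (1 - (\<kappa> * sin \<phi>)^2)) / 3"
definition f where "f x = 1 / sqrt (cheb6 x - cos (2 * \<alpha>))"
definition G where "G \<phi> = sin (pi/3 - v \<phi> / 3) / (3 * sqrt 2 * sqrt (1 - (\<kappa> * sin \<phi>)^2))"

lemma ks_le: "\<bar>\<kappa> * sin \<phi>\<bar> \<le> \<kappa>"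
  using k0 unfolding abs_mult by (simp add: mult_left_le abs_sin_le_one)
lemma ks_lt: "\<bar>\<kappa> * sin \<phi>\<bar> < 1" using ks_le[of \<phi>] k1 by linarith
lemma sq_pos: "0 < 1 - (\<kappa> * sin \<phi>)^2"
  using ks_lt[of \<phi>] by (simp add: abs_square_less_1)

lemma v_bounds: "-\<alpha> \<le> v \<phi> \<and> v \<phi> \<le> \<alpha>"
proof -
  have b: "-\<kappa> \<le> \<kappa> * sin \<phi>" "\<kappa> * sin \<phi> \<le> \<kappa>" using ks_le[of \<phi>] by linarith+
  have "arcsin (\<kappa> * sin \<phi>) \<le> arcsin \<kappa>" using b k1 ks_lt[of \<phi>] by (intro arcsin_le_arcsin) auto
  moreover have "arcsin (-\<kappa>) \<le> arcsin (\<kappa> * sin \<phi>)" using b k1 ks_lt[of \<phi>] by (intro arcsin_le_arcsin) auto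
  moreover have "arcsin (-\<kappa>) = - \<alpha>" using k0 k1 arcsin_k by (simp add: arcsin_minus)
  ultimately show ?thesis by (simp add: v_def arcsin_k)
qed

lemma sin_pos: "0 < sin (pi/3 - v \<phi> / 3)"
  using v_bounds[of \<phi>] a1 by (intro sin_gt_zero) auto

lemma sin_v: "sin (v \<phi>) = \<kappa> * sin \<phi>"
  using ks_lt[of \<phi>] by (simp add: v_def abs_less_iff)

lemma cheb_g: "cheb6 (g \<phi>) - cos (2 * \<alpha>) = 2 * \<kappa>^2 * (cos \<phi>)^2"
proof -
  have "cheb6 (g \<phi>) = cos (2 * pi - 2 * v \<phi>)"
    unfolding g_def cheb6_cos by (simp add: algebra_simps)
  also have "... = cos (2 * v \<phi>)" by (simp add: cos_diff)
  also have "... = 1 - 2 * (\<kappa> * sin \<phi>)^2" by (simp add: cos_double_sin sin_v)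
  finally have "cheb6 (g \<phi>) = 1 - 2 * (\<kappa> * sin \<phi>)^2" .
  moreover have "cos (2 * \<alpha>) = 1 - 2 * \<kappa>^2" by (simp add: cos_double_sin kdef)
  ultimately show ?thesis by (simp add: cos_squared_eq power_mult_distrib algebra_simps)
qed

lemma fg: assumes "-(pi/2) < \<phi>" "\<phi> < pi/2"
  shows "f (g \<phi>) * g' \<phi> = G \<phi>"
proof -
  have c: "cos \<phi> > 0" using assms by (intro cos_gt_zero_pi) auto
  have "sqrt (cheb6 (g \<phi>) - cos (2 * \<alpha>)) = sqrt 2 * \<kappa> * cos \<phi>"
    unfolding cheb_g using c k0 by (simp add: real_sqrt_mult)
  then show ?thesis using c k0 unfolding f_def g'_def G_def by (simp add: field_simps)
qed

lemma dg: "(g has_real_derivative g' \<phi>) (at \<phi>)"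
  unfolding g_def[abs_def] g'_def v_def
  using ks_lt[of \<phi>] sq_pos[of \<phi>]
  by (auto intro!: derivative_eq_intros simp: abs_less_iff field_simps)

lemma v_cont: "isCont v \<phi>"
proof -
  have "continuous_on UNIV v" unfolding v_def[abs_def]
  proof (intro continuous_intros ballI conjI)
    fix x :: real
    show "-1 \<le> \<kappa> * sin x" "\<kappa> * sin x \<le> 1" using ks_lt[of x] by (auto simp: abs_less_iff)
  qed
  then show ?thesis by (simp add: continuous_on_eq_continuous_at)
qed

lemma g'_cont: "isCont g' \<phi>"
  unfolding g'_def[abs_def]
  using sq_pos[of \<phi>]
  by (auto intro!: continuous_intros v_cont)

lemma g'_nonneg: assumes "-(pi/2) \<le> \<phi>" "\<phi> \<le> pi/2" shows "0 \<le> g' \<phi>"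
proof -
  have "cos \<phi> \<ge> 0" using assms by (intro cos_ge_zero) auto
  then show ?thesis unfolding g'_def using sin_pos[of \<phi>] k0 sq_pos[of \<phi>] by simp
qed

lemma g_cont: "isCont g \<phi>"
  using dg[of \<phi>] by (rule DERIV_isCont)

lemma f_cont: assumes "-(pi/2) < \<phi>" "\<phi> < pi/2" shows "isCont f (g \<phi>)"
proof -
  have c: "cos \<phi> > 0" using assms by (intro cos_gt_zero_pi) auto
  have "cheb6 (g \<phi>) - cos (2 * \<alpha>) > 0" unfolding cheb_g using c k0 by simp
  then show ?thesis unfolding f_def cheb6_def by (auto intro!: continuous_intros)
qed

lemma G_cont: "continuous_on A G"
proof (intro continuous_at_imp_continuous_on ballI)
  fix x show "isCont G x" unfolding G_def[abs_def] using sq_pos[of x]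
    by (auto intro!: continuous_intros v_cont)
qed

lemma g_ends: "g (-(pi/2)) = cos ((pi + \<alpha>) / 3)" "g (pi/2) = cos ((pi - \<alpha>) / 3)"
  unfolding g_def v_def using k0 k1 arcsin_k by (simp_all add: arcsin_minus add_divide_distrib diff_divide_distrib)


lemma G_integrable: "set_integrable lborel {-(pi/2)..pi/2} G"
  unfolding set_integrable_def by (rule borel_integrable_compact) (auto intro: G_cont)

lemma g_lim_right: "(g \<longlongrightarrow> g x) (at_right x)"
  using g_cont[of x] unfolding isCont_def by (rule tendsto_mono[OF at_le, rotated]) simp
lemma g_lim_left: "(g \<longlongrightarrow> g x) (at_left x)"
  using g_cont[of x] unfolding isCont_def by (rule tendsto_mono[OF at_le, rotated]) simp

lemma substitution:
  "set_integrable lborel {cos ((pi + \<alpha>) / 3)<..<cos ((pi - \<alpha>) / 3)} f \<and>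
   (LBINT x = cos ((pi + \<alpha>) / 3)..cos ((pi - \<alpha>) / 3). f x) = integral {-(pi/2)..pi/2} G"
proof -
  have fg_int: "set_integrable lborel (einterval (ereal (-(pi/2))) (ereal (pi/2))) (\<lambda>x. f (g x) * g' x)"
  proof -
    have "set_integrable lborel {-(pi/2)<..<pi/2} G"
      by (rule set_integrable_subset[OF G_integrable]) auto
    moreover have "set_integrable lborel {-(pi/2)<..<pi/2} G = set_integrable lborel {-(pi/2)<..<pi/2} (\<lambda>x. f (g x) * g' x)"
      by (rule set_integrable_cong) (auto simp: fg)
    ultimately show ?thesis by simp
  qed
  have A: "((ereal \<circ> g \<circ> real_of_ereal) \<longlongrightarrow> ereal (cos ((pi + \<alpha>) / 3))) (at_right (ereal (-(pi/2))))"
    unfolding ereal_tendsto_simps1 ereal_tendsto_simps2 using g_lim_right[of "-(pi/2)"] g_ends by simp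
  have B: "((ereal \<circ> g \<circ> real_of_ereal) \<longlongrightarrow> ereal (cos ((pi - \<alpha>) / 3))) (at_left (ereal (pi/2)))"
    unfolding ereal_tendsto_simps1 ereal_tendsto_simps2 using g_lim_left[of "pi/2"] g_ends by simp
  note sub = interval_integral_substitution_nonneg[where a = "ereal (-(pi/2))" and b = "ereal (pi/2)"
      and g = g and g' = g' and f = f and A = "ereal (cos ((pi + \<alpha>) / 3))" and B = "ereal (cos ((pi - \<alpha>) / 3))",
      OF _ _ _ _ _ _ A B fg_int]
  have hyps: "ereal (-(pi/2)) < ereal (pi/2)"
    "\<And>x. ereal (-(pi/2)) < ereal x \<Longrightarrow> ereal x < ereal (pi/2) \<Longrightarrow> (g has_real_derivative g' x) (at x)"
    "\<And>x. ereal (-(pi/2)) < ereal x \<Longrightarrow> ereal x < ereal (pi/2) \<Longrightarrow> isCont f (g x)"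
    "\<And>x. ereal (-(pi/2)) < ereal x \<Longrightarrow> ereal x < ereal (pi/2) \<Longrightarrow> isCont g' x"
    "\<And>x. ereal (-(pi/2)) < ereal x \<Longrightarrow> ereal x < ereal (pi/2) \<Longrightarrow> 0 \<le> f (g x)"
    "\<And>x. ereal (-(pi/2)) \<le> ereal x \<Longrightarrow> ereal x \<le> ereal (pi/2) \<Longrightarrow> 0 \<le> g' x"
    by (auto intro: dg f_cont g'_cont g'_nonneg simp: f_def cheb_g)
  note s1 = sub(1)[OF hyps] and s2 = sub(2)[OF hyps]
  have "(LBINT x = cos ((pi + \<alpha>) / 3)..cos ((pi - \<alpha>) / 3). f x) = (LBINT x = -(pi/2)..pi/2. f (g x) * g' x)"
    using s2 by simp
  also have "... = (LBINT x = -(pi/2)..pi/2. G x)"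
    by (rule interval_integral_cong) (auto simp: fg)
  also have "... = integral {-(pi/2)..pi/2} G"
    by (rule interval_integral_eq_integral) (auto intro: G_integrable)
  finally show ?thesis using s1 by simp
qed


lemma S_expr: "S (\<kappa> * sin \<phi>) = cos (v \<phi> / 3) / sqrt (1 - (\<kappa> * sin \<phi>)^2)"
proof -
  have "S (\<kappa> * sin \<phi>) * sqrt (1 - (\<kappa> * sin \<phi>)^2) = cos (v \<phi> / 3)"
    using S_arcsin[OF ks_lt[of \<phi>]] by (simp add: v_def)
  moreover have "sqrt (1 - (\<kappa> * sin \<phi>)^2) > 0" using sq_pos[of \<phi>] by simp
  ultimately show ?thesis by (simp add: field_simps)
qed

definition Od where "Od \<phi> = sin (v \<phi> / 3) / sqrt (1 - (\<kappa> * sin \<phi>)^2)"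

lemma G_split: "G \<phi> = sqrt 3 / (6 * sqrt 2) * S (\<kappa> * sin \<phi>) - 1 / (6 * sqrt 2) * Od \<phi>"
proof -
  have p: "sqrt (1 - (\<kappa> * sin \<phi>)^2) > 0" using sq_pos[of \<phi>] by simp
  show ?thesis unfolding S_expr G_def Od_def sin_diff sin_60 cos_60
    using p by (simp add: field_simps)
qed

lemma Od_odd: "Od (-\<phi>) = - Od \<phi>"
proof -
  have "v (-\<phi>) = - v \<phi>" unfolding v_def using ks_lt[of \<phi>]
    by (simp add: arcsin_minus[symmetric] abs_less_iff)
  then show ?thesis by (simp add: Od_def)
qed

lemma Scomp_cont: "continuous_on A (\<lambda>\<phi>. S (\<kappa> * sin \<phi>))"
proof (intro continuous_at_imp_continuous_on ballI)
  fix x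
  have "(\<lambda>\<phi>. S (\<kappa> * sin \<phi>)) = (\<lambda>\<phi>. cos (v \<phi> / 3) / sqrt (1 - (\<kappa> * sin \<phi>)^2))"
    by (rule ext) (rule S_expr)
  moreover have "isCont (\<lambda>\<phi>. cos (v \<phi> / 3) / sqrt (1 - (\<kappa> * sin \<phi>)^2)) x"
    using sq_pos[of x] by (auto intro!: continuous_intros v_cont)
  ultimately show "isCont (\<lambda>\<phi>. S (\<kappa> * sin \<phi>)) x" by simp
qed

lemma Od_cont: "continuous_on A Od"
proof (intro continuous_at_imp_continuous_on ballI)
  fix x show "isCont Od x" unfolding Od_def[abs_def] using sq_pos[of x]
    by (auto intro!: continuous_intros v_cont)
qed

lemma Od_int0: "integral {-(pi/2)..pi/2} Od = 0"
proof -
  have "integral {-(pi/2)..pi/2} (\<lambda>x. Od (-x)) = integral {-(pi/2)..pi/2} Od"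
    using Henstock_Kurzweil_Integration.integral_reflect_real[where a="-(pi/2)" and b="pi/2" and f=Od] by simp
  moreover have "integral {-(pi/2)..pi/2} (\<lambda>x. Od (-x)) = - integral {-(pi/2)..pi/2} Od"
    by (simp add: Od_odd integral_neg)
  ultimately show ?thesis by simp
qed

lemma G_int: "integral {-(pi/2)..pi/2} G = sqrt 3 / (6 * sqrt 2) * integral {-(pi/2)..pi/2} (\<lambda>\<phi>. S (\<kappa> * sin \<phi>))"
proof -
  have i1: "(\<lambda>\<phi>. S (\<kappa> * sin \<phi>)) integrable_on {-(pi/2)..pi/2}"
    by (rule integrable_continuous_interval[OF Scomp_cont])
  have i2: "Od integrable_on {-(pi/2)..pi/2}"
    by (rule integrable_continuous_interval[OF Od_cont])
  have "integral {-(pi/2)..pi/2} G = integral {-(pi/2)..pi/2} (\<lambda>\<phi>. sqrt 3 / (6 * sqrt 2) * S (\<kappa> * sin \<phi>) - 1 / (6 * sqrt 2) * Od \<phi>)"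
    by (simp add: G_split[abs_def])
  also have "... = sqrt 3 / (6 * sqrt 2) * integral {-(pi/2)..pi/2} (\<lambda>\<phi>. S (\<kappa> * sin \<phi>)) - 1 / (6 * sqrt 2) * integral {-(pi/2)..pi/2} Od"
    using i1 i2 by (simp add: integral_diff integrable_on_cmult_left)
  finally show ?thesis by (simp add: Od_int0)
qed


lemma main: "set_integrable lborel {cos ((pi + \<alpha>) / 3)..cos ((pi - \<alpha>) / 3)} f \<and>
   pi / 2 * hyp2F1 (1/3) (2/3) 1 (\<kappa>^2) = sqrt 6 * (LBINT x = cos ((pi + \<alpha>) / 3)..cos ((pi - \<alpha>) / 3). f x)"
proof
  have "set_integrable lborel {cos ((pi + \<alpha>) / 3)<..<cos ((pi - \<alpha>) / 3)} f" using substitution by blast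
  moreover have "set_integrable lborel {cos ((pi + \<alpha>) / 3)<..<cos ((pi - \<alpha>) / 3)} f
     \<longleftrightarrow> set_integrable lborel {cos ((pi + \<alpha>) / 3)..cos ((pi - \<alpha>) / 3)} f"
    by (rule set_integrable_discrete_difference[where X="{cos ((pi + \<alpha>) / 3), cos ((pi - \<alpha>) / 3)}"]) auto
  ultimately show "set_integrable lborel {cos ((pi + \<alpha>) / 3)..cos ((pi - \<alpha>) / 3)} f" by simp
next
  have e: "sqrt 6 = sqrt 2 * sqrt 3" by (simp add: real_sqrt_mult[symmetric])
  have "sqrt 6 * (LBINT x = cos ((pi + \<alpha>) / 3)..cos ((pi - \<alpha>) / 3). f x)
      = sqrt 6 * (sqrt 3 / (6 * sqrt 2) * integral {-(pi/2)..pi/2} (\<lambda>\<phi>. S (\<kappa> * sin \<phi>)))"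
    using substitution G_int by simp
  also have "... = integral {-(pi/2)..pi/2} (\<lambda>\<phi>. S (\<kappa> * sin \<phi>)) / 2"
    unfolding e by (simp add: field_simps)
  also have "... = pi / 2 * hyp2F1 (1/3) (2/3) 1 (\<kappa>^2)"
    using series_final[of \<kappa>] k0 k1 by simp
  finally show "pi / 2 * hyp2F1 (1/3) (2/3) 1 (\<kappa>^2) = sqrt 6 * (LBINT x = cos ((pi + \<alpha>) / 3)..cos ((pi - \<alpha>) / 3). f x)" by simp
qed

end

theorem theorem4:
  fixes \<alpha> \<kappa> :: real
  assumes "0 < \<alpha>" and "\<alpha> < pi / 2"
    and "\<kappa> = sin \<alpha>"
  shows "set_integrable lborel {cos ((pi + \<alpha>) / 3) .. cos ((pi - \<alpha>) / 3)}
           (\<lambda>x. 1 / sqrt (cheb6 x - cos (2 * \<alpha>)))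
       \<and> pi / 2 * hyp2F1 (1/3) (2/3) 1 (\<kappa>\<^sup>2) =
         sqrt 6 * (LBINT x = cos ((pi + \<alpha>) / 3) .. cos ((pi - \<alpha>) / 3).
                     1 / sqrt (cheb6 x - cos (2 * \<alpha>)))"
proof -
  interpret th4 \<alpha> \<kappa> using assms by unfold_locales
  show ?thesis using main unfolding f_def[abs_def] .
qed

end
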